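(* Let $\lambda\in P$ with $\sharp^{(k,r)}(\lambda)\le1$. Then there is no $\mu\in P$, $\mu\ne\lambda$, with $t^{\rho(\mu)_i}q^{\mu_i}=t^{\rho(\lambda)_i}q^{\lambda_i}$ for all $i$ at the specialization $(\ast)$.
   Context: Let $P=\mathbb Z^n$. For $\lambda\in P$, $\rho(\lambda)$ is the unique permutation of $(\frac{n-1}2,\dots,-\frac{n-1}2)$ with $\rho(\lambda)_i>\rho(\lambda)_j$ iff $\lambda_i>\lambda_j$ or ($\lambda_i=\lambda_j$, $i<j$). Fix $1\le k\le n-1$, $r\ge2$, $g=\gcd(k+1,r-1)$, $\tau=e^{2\pi\sqrt{-1}/(r-1)}$, specialization $(\ast)$: $t=u^{(r-1)/g}$, $q=\tau u^{-(k+1)/g}$ (so $t^{k+1}q^{r-1}=1$). $u_\lambda(f)=f(t^{-\rho(\lambda)_1}q^{-\lambda_1},\dots,t^{-\rho(\lambda)_n}q^{-\lambda_n})$. A wheel in $\lambda$ is a tuple $(i_1,\dots,i_{k+1})$ of distinct indices such that, at $(\ast)$, $u_\lambda(x_{i_{a+1}})=u_\lambda(x_{i_a})tq^{s_a}$ ($1\le a\le k$) for some $s_a\in\mathbb Z_{\ge0}$ with $\sum s_a\le r-2$ and $i_a<i_{a+1}$ whenever $s_a=0$. Wheels that are cyclic rotations of each other are identified; $\sharp^{(k,r)}(\lambda)$ is the number of classes of wheels in $\lambda$. *)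

theory Defs
  imports Complex_Main "HOL-Library.Multiset"
begin

text \<open>Weights lambda in P = Z^n are int lists of length n; indices are 0-based
  (0..n-1), which preserves their order.\<close>

definition rho_vals :: "nat \<Rightarrow> real list" where
  "rho_vals n = map (\<lambda>j. (real n - 1) / 2 - real j) [0..<n]"

definition rho :: "int list \<Rightarrow> real list" where
  "rho lam = (THE r. length r = length lam \<and> mset r = mset (rho_vals (length lam)) \<and>
     (\<forall>i<length lam. \<forall>j<length lam.
        (r ! i > r ! j) \<longleftrightarrow> (lam ! i > lam ! j \<or> (lam ! i = lam ! j \<and> i < j))))"

definition gg :: "nat \<Rightarrow> nat \<Rightarrow> nat" where
  "gg k r = gcd (k + 1) (r - 1)"

definition tau :: "nat \<Rightarrow> complex" where
  "tau r = cis (2 * pi / real (r - 1))"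

text \<open>Specialization (*): t = u^((r-1)/g), q = tau * u^(-(k+1)/g), with u a formal
  (generic) variable; we model u as ranging over the positive reals.\<close>
definition spec_t :: "nat \<Rightarrow> nat \<Rightarrow> real \<Rightarrow> real" where
  "spec_t k r u = u powr (real (r - 1) / real (gg k r))"

definition spec_q :: "nat \<Rightarrow> nat \<Rightarrow> real \<Rightarrow> complex" where
  "spec_q k r u = tau r * complex_of_real (u powr (- real (k + 1) / real (gg k r)))"

definition spec_mono :: "nat \<Rightarrow> nat \<Rightarrow> real \<Rightarrow> real \<Rightarrow> int \<Rightarrow> complex" where
  "spec_mono k r u a b = complex_of_real (spec_t k r u powr a) * (spec_q k r u) powi b"

definition ulam :: "nat \<Rightarrow> nat \<Rightarrow> int list \<Rightarrow> nat \<Rightarrow> real \<Rightarrow> complex" where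
  "ulam k r lam i u = spec_mono k r u (- (rho lam ! i)) (- (lam ! i))"

text \<open>Equality "at (*)" means equality as functions of the formal variable u,
  i.e. for all u > 0.\<close>
definition is_wheel :: "nat \<Rightarrow> nat \<Rightarrow> int list \<Rightarrow> nat list \<Rightarrow> bool" where
  "is_wheel k r lam w \<longleftrightarrow>
     length w = k + 1 \<and> distinct w \<and> (\<forall>i\<in>set w. i < length lam) \<and>
     (\<exists>s :: nat list. length s = k \<and> sum_list s \<le> r - 2 \<and>
        (\<forall>a<k. (\<forall>u>0. ulam k r lam (w ! (a + 1)) u
                      = ulam k r lam (w ! a) u * spec_mono k r u 1 (int (s ! a)))
              \<and> (s ! a = 0 \<longrightarrow> w ! a < w ! (a + 1))))"

definition wheels :: "nat \<Rightarrow> nat \<Rightarrow> int list \<Rightarrow> nat list set" where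
  "wheels k r lam = {w. is_wheel k r lam w}"

definition wheel_rot :: "nat \<Rightarrow> nat \<Rightarrow> int list \<Rightarrow> (nat list \<times> nat list) set" where
  "wheel_rot k r lam = {(w, w'). w \<in> wheels k r lam \<and> w' \<in> wheels k r lam \<and> (\<exists>j. w' = rotate j w)}"

definition sharp :: "nat \<Rightarrow> nat \<Rightarrow> int list \<Rightarrow> nat" where
  "sharp k r lam = card (wheels k r lam // wheel_rot k r lam)"

end

theory Submission
  imports Defs
begin

lemma spec_mono_alt:
  assumes "u > 0"
  shows "spec_mono k r u a b =
    complex_of_real (u powr ((real (r - 1) * a - real (k + 1) * real_of_int b) / real (gg k r)))
    * tau r powi b"
proof -
  have g: "real (gg k r) > 0" unfolding gg_def by simp
  have "spec_t k r u powr a = u powr ((real (r - 1) / real (gg k r)) * a)"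
    unfolding spec_t_def using assms by (simp add: powr_powr)
  moreover have "spec_q k r u powi b = tau r powi b *
      complex_of_real ((u powr (- real (k + 1) / real (gg k r))) powi b)"
    unfolding spec_q_def by (simp add: power_int_mult_distrib)
  moreover have "(u powr (- real (k + 1) / real (gg k r))) powi b
       = u powr ((- real (k + 1) / real (gg k r)) * real_of_int b)"
  proof -
    have "(u powr (- real (k + 1) / real (gg k r))) powi b
        = (u powr (- real (k + 1) / real (gg k r))) powr real_of_int b"
      using assms by (simp add: powr_real_of_int')
    then show ?thesis by (simp add: powr_powr)
  qed
  ultimately have "spec_mono k r u a b = complex_of_real (u powr ((real (r - 1) / real (gg k r)) * a)
     * u powr ((- real (k + 1) / real (gg k r)) * real_of_int b)) * tau r powi b"
    unfolding spec_mono_def by (simp add: mult_ac)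
  also have "u powr ((real (r - 1) / real (gg k r)) * a)
     * u powr ((- real (k + 1) / real (gg k r)) * real_of_int b)
     = u powr ((real (r - 1) * a - real (k + 1) * real_of_int b) / real (gg k r))"
    unfolding powr_add[symmetric] by (rule arg_cong[of _ _ "\<lambda>e. u powr e"]) (simp add: diff_divide_distrib add_divide_distrib field_simps)
  finally show ?thesis by simp
qed

lemma tau_powi: "tau r powi m = cis (real_of_int m * (2 * pi / real (r - 1)))"
  unfolding tau_def by (simp add: cis_power_int)

lemma tau_powi_eq:
  assumes "int (r - 1) dvd (b - b')"
  shows "tau r powi b = tau r powi b'"
proof (cases "r - 1 = 0")
  case True
  then show ?thesis using assms by simp
next
  case False
  from assms obtain c where c: "b = b' + int (r - 1) * c" by (auto simp: dvd_def algebra_simps)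
  have "real_of_int b * (2 * pi / real (r - 1)) = real_of_int b' * (2 * pi / real (r - 1)) + 2 * pi * real_of_int c"
    using False by (simp add: c field_simps)
  then have "cis (real_of_int b * (2 * pi / real (r - 1))) = cis (real_of_int b' * (2 * pi / real (r - 1))) * cis (2 * pi * real_of_int c)"
    by (metis cis_mult)
  also have "cis (2 * pi * real_of_int c) = 1" by simp
  finally show ?thesis by (simp add: tau_powi)
qed

lemma spec_mono_eq_suff:
  assumes "real (r - 1) * a - real (k + 1) * real_of_int b = real (r - 1) * a' - real (k + 1) * real_of_int b'"
    and "int (r - 1) dvd (b - b')" and "u > 0"
  shows "spec_mono k r u a b = spec_mono k r u a' b'"
  using assms by (simp add: spec_mono_alt tau_powi_eq[OF assms(2)])

lemma spec_mono_eq_nec: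
  assumes "\<forall>u>0. spec_mono k r u a b = spec_mono k r u a' b'" and "r \<ge> 2"
  shows "real (r - 1) * a - real (k + 1) * real_of_int b = real (r - 1) * a' - real (k + 1) * real_of_int b'"
    and "int (r - 1) dvd (b - b')"
proof -
  have g: "real (gg k r) > 0" unfolding gg_def by simp
  define E where "E = (real (r - 1) * a - real (k + 1) * real_of_int b) / real (gg k r)"
  define E' where "E' = (real (r - 1) * a' - real (k + 1) * real_of_int b') / real (gg k r)"
  have eq: "complex_of_real (2 powr E) * tau r powi b = complex_of_real (2 powr E') * tau r powi b'"
    using assms(1)[rule_format, of 2] by (simp add: spec_mono_alt E_def E'_def)
  have n1: "norm (tau r powi m) = 1" for m by (simp add: tau_powi)
  have "norm (complex_of_real (2 powr E) * tau r powi b) = 2 powr E"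
    by (simp add: norm_mult n1)
  moreover have "norm (complex_of_real (2 powr E') * tau r powi b') = 2 powr E'"
    by (simp add: norm_mult n1)
  ultimately have "2 powr E = (2::real) powr E'" using eq by metis
  then have EE: "E = E'" by (simp add: powr_inj)
  then show "real (r - 1) * a - real (k + 1) * real_of_int b = real (r - 1) * a' - real (k + 1) * real_of_int b'"
    using g by (simp add: E_def E'_def)
  have tt: "tau r powi b = tau r powi b'" using eq EE by simp
  have r1: "real (r - 1) > 0" using assms(2) by simp
  have "cis (real_of_int b * (2 * pi / real (r - 1))) = cis (real_of_int b' * (2 * pi / real (r - 1)))"
    using tt by (simp add: tau_powi)
  then have "cis (real_of_int b * (2 * pi / real (r - 1))) * cis (- (real_of_int b' * (2 * pi / real (r - 1)))) = 1"
    by (simp add: cis_mult)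
  moreover have "cis ((real_of_int b - real_of_int b') * (2 * pi / real (r - 1))) =
     cis (real_of_int b * (2 * pi / real (r - 1))) * cis (- (real_of_int b' * (2 * pi / real (r - 1))))"
    by (subst cis_mult) (simp add: left_diff_distrib diff_divide_distrib)
  ultimately have "cis ((real_of_int b - real_of_int b') * (2 * pi / real (r - 1))) = 1"
    by simp
  then have "cos ((real_of_int b - real_of_int b') * (2 * pi / real (r - 1))) = 1"
    by (metis cis.sel(1) one_complex.sel(1))
  then obtain m :: int where m: "(real_of_int b - real_of_int b') * (2 * pi / real (r - 1)) = m * 2 * pi"
    by (auto simp: cos_one_2pi_int)
  then have "(real_of_int b - real_of_int b') * (2 * pi) = (real_of_int m * real (r - 1)) * (2 * pi)"
    using r1 by (simp add: divide_simps)
  then have "real_of_int b - real_of_int b' = real_of_int m * real (r - 1)"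
    by (metis mult_right_cancel pi_neq_zero mult_eq_0_iff zero_neq_numeral)
  then have "b - b' = m * int (r - 1)" by (metis of_int_diff of_int_eq_iff of_int_mult of_int_of_nat_eq)
  then show "int (r - 1) dvd (b - b')" by simp
qed

definition prec :: "int list \<Rightarrow> nat \<Rightarrow> nat \<Rightarrow> bool" where
  "prec l z x \<longleftrightarrow> l ! z > l ! x \<or> (l ! z = l ! x \<and> z < x)"

definition sig :: "int list \<Rightarrow> nat \<Rightarrow> nat" where
  "sig l x = card {z. z < length l \<and> prec l z x}"

lemma prec_trans: "prec l a b \<Longrightarrow> prec l b c \<Longrightarrow> prec l a c"
  unfolding prec_def by auto

lemma prec_irrefl: "\<not> prec l a a"
  unfolding prec_def by auto

lemma prec_total: "a \<noteq> b \<Longrightarrow> prec l a b \<or> prec l b a"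
  unfolding prec_def by auto

lemma sig_lt: assumes "x < length l" shows "sig l x < length l"
proof -
  have "{z. z < length l \<and> prec l z x} \<subseteq> {..<length l} - {x}"
    using prec_irrefl by auto
  then have "sig l x \<le> card ({..<length l} - {x})"
    unfolding sig_def by (intro card_mono) auto
  then show ?thesis using assms by simp
qed

lemma sig_mono: assumes "z < length l" "prec l z x" shows "sig l z < sig l x"
proof -
  have "{w. w < length l \<and> prec l w z} \<subset> {w. w < length l \<and> prec l w x}"
    using assms prec_trans prec_irrefl by blast
  then show ?thesis unfolding sig_def by (intro psubset_card_mono) auto
qed

lemma sig_less_iff: assumes "z < length l" "x < length l"
  shows "sig l z < sig l x \<longleftrightarrow> prec l z x"
  using assms sig_mono prec_total by (metis less_asym less_irrefl)

lemma sig_inj: "inj_on (sig l) {..<length l}"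
  unfolding inj_on_def using sig_mono prec_total by (metis lessThan_iff less_irrefl)

lemma sig_image: "sig l ` {..<length l} = {..<length l}"
proof -
  have "sig l ` {..<length l} \<subseteq> {..<length l}" using sig_lt by auto
  moreover have "card (sig l ` {..<length l}) = card {..<length l}"
    using sig_inj card_image by blast
  ultimately show ?thesis by (simp add: card_subset_eq)
qed

lemma sig_surj: "c < length l \<Longrightarrow> \<exists>x<length l. sig l x = c"
  using sig_image by (metis imageE lessThan_iff)

lemma sig_succ: assumes "x < length l" "y < length l" "sig l y = sig l x + 1"
  shows "prec l x y"
  using sig_less_iff[OF assms(1,2)] assms(3) by simp

lemma rho_eq:
  assumes "length l = n"
  shows "rho l = map (\<lambda>i. (real n - 1) / 2 - real (sig l i)) [0..<n]"
proof -
  define g where "g = (\<lambda>j::nat. (real n - 1) / 2 - real j)"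
  have ginj: "inj g" unfolding g_def inj_on_def by auto
  have rv: "rho_vals n = map g [0..<n]" unfolding rho_vals_def g_def by simp
  define R where "R = map (\<lambda>i. (real n - 1) / 2 - real (sig l i)) [0..<n]"
  have RR: "R = map g (map (sig l) [0..<n])" unfolding R_def g_def by simp
  let ?P = "\<lambda>r. length r = length l \<and> mset r = mset (rho_vals (length l)) \<and>
     (\<forall>i<length l. \<forall>j<length l.
        (r ! i > r ! j) \<longleftrightarrow> (l ! i > l ! j \<or> (l ! i = l ! j \<and> i < j)))"
  have PR: "?P R"
  proof (intro conjI)
    show "length R = length l" using assms R_def by simp
    have "mset (map (sig l) [0..<n]) = mset [0..<n]"
    proof -
      have "distinct (map (sig l) [0..<n])"
        using sig_inj[of l] assms by (simp add: distinct_map atLeast0LessThan)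
      moreover have "set (map (sig l) [0..<n]) = set [0..<n]"
        using sig_image[of l] assms by (simp add: atLeast0LessThan)
      ultimately show ?thesis by (metis distinct_upt set_eq_iff_mset_eq_distinct)
    qed
    then show "mset R = mset (rho_vals (length l))"
      unfolding RR rv assms by (metis mset_map)
    show "\<forall>i<length l. \<forall>j<length l. (R ! i > R ! j) \<longleftrightarrow> (l ! i > l ! j \<or> (l ! i = l ! j \<and> i < j))"
      using sig_less_iff assms unfolding R_def prec_def by auto
  qed
  have uniq: "r = R" if Pr: "?P r" for r
  proof (rule nth_equalityI)
    show "length r = length R" using Pr assms R_def by simp
    fix i assume "i < length r"
    then have i: "i < n" using Pr assms by simp
    have ms: "mset r = mset (map g [0..<n])" using Pr assms rv by simp
    then have setr: "set r = g ` {..<n}" by (metis set_mset_mset set_map set_upt atLeast0LessThan)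
    have dr: "distinct r"
      using ms ginj by (metis distinct_map distinct_upt mset_eq_imp_distinct_iff inj_on_subset subset_UNIV)
    have lr: "length r = n" using Pr assms by simp
    have "r ! i \<in> set r" using i lr by simp
    then obtain t where t: "t < n" "r ! i = g t" using setr by auto
    have "{z. z < length l \<and> prec l z i} = {z. z < n \<and> r ! z > r ! i}"
      using Pr i assms unfolding prec_def by auto
    then have "sig l i = card {z. z < n \<and> r ! z > r ! i}" unfolding sig_def by simp
    also have "\<dots> = card ((!) r ` {z. z < n \<and> r ! z > r ! i})"
      by (rule card_image[symmetric]) (use dr lr in \<open>auto simp: inj_on_def nth_eq_iff_index_eq\<close>)
    also have "(!) r ` {z. z < n \<and> r ! z > r ! i} = {v \<in> set r. v > r ! i}"
      using lr by (auto simp: in_set_conv_nth)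
    also have "{v \<in> set r. v > r ! i} = g ` {..<t}"
      using setr t unfolding g_def by auto
    also have "card (g ` {..<t}) = t" using ginj by (simp add: card_image inj_on_subset)
    finally show "r ! i = R ! i" using t i unfolding R_def g_def by simp
  qed
  have "rho l = R" unfolding rho_def
    by (rule the_equality[where P="?P"]) (use PR uniq in blast)+
  then show ?thesis unfolding R_def .
qed

definition good :: "nat \<Rightarrow> nat \<Rightarrow> (nat \<Rightarrow> int) \<Rightarrow> (nat \<Rightarrow> nat) \<Rightarrow> int \<Rightarrow> (nat \<Rightarrow> nat) \<Rightarrow> bool" where
  "good n K key cls B s \<longleftrightarrow> (\<forall>x<n. s x < n) \<and> inj_on s {..<n} \<and> (\<forall>c<n. \<exists>x<n. s x = c) \<and>
     (\<forall>x<n. s x mod K = cls x) \<and> (\<forall>x<n. \<forall>y<n. s y = s x + 1 \<longrightarrow> key y < key x + B)"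

definition Pset :: "nat \<Rightarrow> nat \<Rightarrow> nat \<Rightarrow> (nat \<Rightarrow> nat) \<Rightarrow> nat \<Rightarrow> nat \<Rightarrow> nat set" where
  "Pset n K t0 s a t = {x. x < n \<and> t0 \<le> s x \<and> s x \<le> s a \<and> s x mod K = (t0 + t) mod K}"

lemma mod_suc_cancel: "(a + 1) mod (K::nat) = (b + 1) mod K \<Longrightarrow> a mod K = b mod K"
  by (simp add: nat_mod_eq_iff)

lemma mod_suc_cancel2: "(a + 1) mod (K::nat) = (t0 + (t + 1) mod K) mod K \<Longrightarrow> a mod K = (t0 + t) mod K"
proof -
  assume h: "(a + 1) mod (K::nat) = (t0 + (t + 1) mod K) mod K"
  have "(t0 + (t + 1) mod K) mod K = ((t0 + t) + 1) mod K" by (simp add: mod_add_right_eq add.assoc)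
  then show ?thesis using h mod_suc_cancel by metis
qed

lemma goodD:
  assumes "good n K key cls B s"
  shows "\<And>x. x < n \<Longrightarrow> s x < n" and "\<And>x y. x < n \<Longrightarrow> y < n \<Longrightarrow> s x = s y \<Longrightarrow> x = y"
    and "\<And>c. c < n \<Longrightarrow> \<exists>x<n. s x = c" and "\<And>x. x < n \<Longrightarrow> s x mod K = cls x"
    and "\<And>x y. x < n \<Longrightarrow> y < n \<Longrightarrow> s y = s x + 1 \<Longrightarrow> key y < key x + B"
  using assms unfolding good_def inj_on_def by auto

lemma PsetI: "x < n \<Longrightarrow> t0 \<le> s x \<Longrightarrow> s x \<le> s a \<Longrightarrow> s x mod K = (t0 + t) mod K \<Longrightarrow> x \<in> Pset n K t0 s a t"
  unfolding Pset_def by simp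

lemma PsetD: "x \<in> Pset n K t0 s a t \<Longrightarrow> x < n \<and> t0 \<le> s x \<and> s x \<le> s a \<and> s x mod K = (t0 + t) mod K"
  unfolding Pset_def by simp

lemma pred_help:
  assumes ga: "good n K key cls B sa" and gb: "good n K key cls B sb"
    and b: "b < n" "sa b = t0" "sb b > t0"
    and y: "y \<in> Pset n K t0 sa a ((t + 1) mod K)"
  shows "\<exists>x \<in> Pset n K t0 sa a t \<union> Pset n K t0 sb b t. key y < key x + B"
proof -
  from PsetD[OF y] have yn: "y < n" and y1: "t0 \<le> sa y" and y2: "sa y \<le> sa a" and y3: "sa y mod K = (t0 + (t + 1) mod K) mod K"
    by auto
  show ?thesis
  proof (cases "sa y > t0")
    case True
    have "sa y - 1 < n" using goodD(1)[OF ga yn] by simp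
    then obtain x where x: "x < n" "sa x = sa y - 1" using goodD(3)[OF ga] by blast
    then have sx: "sa y = sa x + 1" using True by simp
    then have "key y < key x + B" using goodD(5)[OF ga x(1) yn] by simp
    moreover have "sa x mod K = (t0 + t) mod K"
      using mod_suc_cancel2[of "sa x" K t0 t] y3 sx by metis
    then have "x \<in> Pset n K t0 sa a t"
      by (intro PsetI x(1)) (use x True y2 in linarith)+
    ultimately show ?thesis by blast
  next
    case False
    then have "sa y = sa b" using y1 b by simp
    then have yb: "y = b" using goodD(2)[OF ga yn b(1)] by simp
    have "sb b - 1 < n" using goodD(1)[OF gb b(1)] by simp
    then obtain x where x: "x < n" "sb x = sb b - 1" using goodD(3)[OF gb] by blast
    then have sx: "sb b = sb x + 1" using b by simp
    then have "key b < key x + B" using goodD(5)[OF gb x(1) b(1)] by simp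
    moreover have "sb b mod K = sa b mod K" using goodD(4)[OF ga b(1)] goodD(4)[OF gb b(1)] by simp
    then have "sb x mod K = (t0 + t) mod K"
      using mod_suc_cancel2[of "sb x" K t0 t] y3 sx yb by metis
    then have "x \<in> Pset n K t0 sb b t"
      by (intro PsetI x(1)) (use x b sx in linarith)+
    ultimately show ?thesis using yb by blast
  qed
qed

lemma succ_help:
  assumes ga: "good n K key cls B sa" and gb: "good n K key cls B sb"
    and a: "a < n" "sb a = t0" "sa a > t0" and b: "b < n" "sb b > t0"
    and x: "x \<in> Pset n K t0 sa a t"
  shows "\<exists>y \<in> Pset n K t0 sa a ((t + 1) mod K) \<union> Pset n K t0 sb b ((t + 1) mod K). key y < key x + B"
proof -
  from PsetD[OF x] have xn: "x < n" and x1: "t0 \<le> sa x" and x2: "sa x \<le> sa a" and x3: "sa x mod K = (t0 + t) mod K"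
    by auto
  have modr: "(c + 1) mod K = (t0 + (t + 1) mod K) mod K" if "c mod K = (t0 + t) mod K" for c
  proof -
    have "(c + 1) mod K = (c mod K + 1) mod K" by (metis mod_add_left_eq)
    also have "\<dots> = ((t0 + t) mod K + 1) mod K" using that by simp
    also have "\<dots> = (t0 + (t + 1)) mod K" by (metis mod_add_left_eq add.assoc)
    also have "\<dots> = (t0 + (t + 1) mod K) mod K" by (simp add: mod_add_right_eq)
    finally show ?thesis .
  qed
  show ?thesis
  proof (cases "sa x < sa a")
    case True
    have "sa x + 1 < n" using True goodD(1)[OF ga a(1)] by simp
    then obtain y where y: "y < n" "sa y = sa x + 1" using goodD(3)[OF ga] by blast
    then have "key y < key x + B" using goodD(5)[OF ga xn y(1)] by simp
    moreover have "sa y mod K = (t0 + (t + 1) mod K) mod K"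
      using modr[of "sa x"] x3 y(2) by metis
    then have "y \<in> Pset n K t0 sa a ((t + 1) mod K)"
      by (intro PsetI y(1)) (use y True x1 in linarith)+
    ultimately show ?thesis by blast
  next
    case False
    then have "sa x = sa a" using x2 by simp
    then have xa: "x = a" using goodD(2)[OF ga xn a(1)] by simp
    have "t0 + 1 < n" using b goodD(1)[OF gb b(1)] by simp
    then obtain y where y: "y < n" "sb y = t0 + 1" using goodD(3)[OF gb] by blast
    then have "key y < key a + B" using goodD(5)[OF gb a(1) y(1)] a by simp
    moreover have "sb a mod K = sa a mod K" using goodD(4)[OF ga a(1)] goodD(4)[OF gb a(1)] by simp
    then have "t0 mod K = (t0 + t) mod K" using goodD(4)[OF ga a(1)] x3 xa a(2) by metis
    then have "sb y mod K = (t0 + (t + 1) mod K) mod K"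
      using modr[of "t0"] y(2) by metis
    then have "y \<in> Pset n K t0 sb b ((t + 1) mod K)"
      by (intro PsetI y(1)) (use y b in linarith)+
    ultimately show ?thesis using xa by blast
  qed
qed

lemma finite_argmax:
  fixes f :: "nat \<Rightarrow> int"
  assumes "finite A" "A \<noteq> {}"
  shows "\<exists>x\<in>A. \<forall>z\<in>A. f z \<le> f x"
proof -
  have "Max (f ` A) \<in> f ` A" using assms by simp
  then obtain x where x: "x \<in> A" "f x = Max (f ` A)" by auto
  show ?thesis
  proof (rule bexI[OF _ x(1)], rule ballI)
    fix z assume z: "z \<in> A"
    have "f z \<in> f ` A" using z by simp
    then show "f z \<le> f x" using x(2) Max_ge[of "f ` A" "f z"] assms(1) by simp
  qed
qed

lemma finite_argmin:
  fixes f :: "nat \<Rightarrow> int"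
  assumes "finite A" "A \<noteq> {}"
  shows "\<exists>x\<in>A. \<forall>z\<in>A. f x \<le> f z"
proof -
  have "Min (f ` A) \<in> f ` A" using assms by simp
  then obtain x where x: "x \<in> A" "f x = Min (f ` A)" by auto
  show ?thesis
  proof (rule bexI[OF _ x(1)], rule ballI)
    fix z assume z: "z \<in> A"
    have "f z \<in> f ` A" using z by simp
    then show "f x \<le> f z" using x(2) Min_le[of "f ` A" "f z"] assms(1) by simp
  qed
qed

definition is_cyc :: "nat \<Rightarrow> nat \<Rightarrow> (nat \<Rightarrow> int) \<Rightarrow> (nat \<Rightarrow> nat) \<Rightarrow> int \<Rightarrow> nat \<Rightarrow> (nat \<Rightarrow> nat) \<Rightarrow> bool" where
  "is_cyc n K key cls B c y \<longleftrightarrow> (\<forall>t<K. y t < n \<and> cls (y t) = (c + t) mod K \<and>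
      key (y ((t + 1) mod K)) < key (y t) + B)"

lemma core:
  assumes K: "K \<ge> 1" and inj: "inj_on key {..<n}"
    and g1: "good n K key cls B s1" and g2: "good n K key cls B s2"
    and ij: "i < n" "j < n" "s1 j = t0" "s2 i = t0" "s1 i > t0" "s2 j > t0"
  shows "\<exists>y1 y2. is_cyc n K key cls B t0 y1 \<and> is_cyc n K key cls B t0 y2 \<and> y1 0 \<noteq> y2 0"
proof -
  define Y where "Y t = Pset n K t0 s1 i t \<union> Pset n K t0 s2 j t" for t
  have fin: "finite (Y t)" for t unfolding Y_def Pset_def by auto
  have clsY: "y \<in> Y t \<Longrightarrow> y < n \<and> cls y = (t0 + t) mod K" for y t
    unfolding Y_def using PsetD[of y n K t0 s1 i t] PsetD[of y n K t0 s2 j t] goodD(4)[OF g1, of y] goodD(4)[OF g2, of y]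
    by auto
  have pred: "\<exists>x\<in>Y t. key y < key x + B" if "y \<in> Y ((t + 1) mod K)" for y t
  proof -
    from that consider "y \<in> Pset n K t0 s1 i ((t + 1) mod K)" | "y \<in> Pset n K t0 s2 j ((t + 1) mod K)"
      unfolding Y_def by blast
    then show ?thesis
    proof cases
      case 1 then show ?thesis using pred_help[OF g1 g2, of j t0 y i t] ij unfolding Y_def by blast
    next
      case 2 then show ?thesis using pred_help[OF g2 g1, of i t0 y j t] ij unfolding Y_def by blast
    qed
  qed
  have succ: "\<exists>y\<in>Y ((t + 1) mod K). key y < key x + B" if "x \<in> Y t" for x t
  proof -
    from that consider "x \<in> Pset n K t0 s1 i t" | "x \<in> Pset n K t0 s2 j t"
      unfolding Y_def by blast
    then show ?thesis
    proof cases
      case 1 then show ?thesis using succ_help[OF g1 g2, of i t0 j x t] ij unfolding Y_def by blast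
    next
      case 2 then show ?thesis using succ_help[OF g2 g1, of j t0 i x t] ij unfolding Y_def by blast
    qed
  qed
  have cls_i: "s1 i mod K = t0 mod K"
    using goodD(4)[OF g1 ij(1)] goodD(4)[OF g2 ij(1)] ij(4) by simp
  have big: "t0 + K \<le> s1 i"
  proof -
    have "K dvd (s1 i - t0)" using cls_i ij by (simp add: mod_eq_dvd_iff_nat)
    moreover have "s1 i - t0 > 0" using ij by simp
    ultimately have "K \<le> s1 i - t0" by (simp add: dvd_imp_le)
    then show ?thesis using ij(5) by linarith
  qed
  have ne: "Y t \<noteq> {}" if "t < K" for t
  proof -
    have "t0 + t < n" using big that goodD(1)[OF g1 ij(1)] by linarith
    then obtain x where x: "x < n" "s1 x = t0 + t" using goodD(3)[OF g1] by blast
    then have "x \<in> Y t" using big that unfolding Y_def Pset_def by auto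
    then show ?thesis by blast
  qed
  have iY: "i \<in> Y 0" using ij cls_i unfolding Y_def Pset_def by auto
  have jY: "j \<in> Y 0" using ij cls_i unfolding Y_def Pset_def by auto
  have "\<forall>t. \<exists>x. t < K \<longrightarrow> x \<in> Y t \<and> (\<forall>z\<in>Y t. key z \<le> key x)"
    using finite_argmax[OF fin ne] by blast
  then obtain y1 where y1: "\<And>t. t < K \<Longrightarrow> y1 t \<in> Y t \<and> (\<forall>z\<in>Y t. key z \<le> key (y1 t))"
    by metis
  have "\<forall>t. \<exists>x. t < K \<longrightarrow> x \<in> Y t \<and> (\<forall>z\<in>Y t. key x \<le> key z)"
    using finite_argmin[OF fin ne] by blast
  then obtain y2 where y2: "\<And>t. t < K \<Longrightarrow> y2 t \<in> Y t \<and> (\<forall>z\<in>Y t. key (y2 t) \<le> key z)"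
    by metis
  have c1: "is_cyc n K key cls B t0 y1"
    unfolding is_cyc_def
  proof (intro allI impI conjI)
    fix t assume t: "t < K"
    show "y1 t < n" "cls (y1 t) = (t0 + t) mod K" using y1[OF t] clsY by auto
    have "(t + 1) mod K < K" using K by simp
    then obtain x where "x \<in> Y t" "key (y1 ((t + 1) mod K)) < key x + B"
      using y1 pred by blast
    then show "key (y1 ((t + 1) mod K)) < key (y1 t) + B" using y1[OF t] by force
  qed
  have c2: "is_cyc n K key cls B t0 y2"
    unfolding is_cyc_def
  proof (intro allI impI conjI)
    fix t assume t: "t < K"
    show "y2 t < n" "cls (y2 t) = (t0 + t) mod K" using y2[OF t] clsY by auto
    have tK: "(t + 1) mod K < K" using K by simp
    obtain y where "y \<in> Y ((t + 1) mod K)" "key y < key (y2 t) + B"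
      using y2[OF t] succ by blast
    then show "key (y2 ((t + 1) mod K)) < key (y2 t) + B" using y2[OF tK] by force
  qed
  have "i \<noteq> j" using ij by auto
  have K0: "0 < K" using K by simp
  have "y1 0 \<noteq> y2 0"
  proof
    assume e: "y1 0 = y2 0"
    have "key i \<le> key (y1 0)" "key j \<le> key (y1 0)" using y1[OF K0] iY jY by auto
    moreover have "key (y2 0) \<le> key i" "key (y2 0) \<le> key j" using y2[OF K0] iY jY by auto
    ultimately have "key i = key j" using e by simp
    then show False using inj ij \<open>i \<noteq> j\<close> unfolding inj_on_def by auto
  qed
  then show ?thesis using c1 c2 by blast
qed

lemma aux1: fixes N d e :: int assumes "\<bar>e\<bar> < N" shows "N * d + e < 0 \<longleftrightarrow> d < 0 \<or> (d = 0 \<and> e < 0)"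
proof (cases "d = 0")
  case False
  show ?thesis
  proof (cases "d < 0")
    case True
    then have "N * d \<le> N * (-1)" using assms by (intro mult_left_mono) auto
    then show ?thesis using assms True by auto
  next
    case f: False
    then have "N * d \<ge> N * 1" using assms False by (intro mult_left_mono) auto
    then show ?thesis using assms f False by auto
  qed
qed simp
lemma aux2: fixes N d e :: int assumes "\<bar>e\<bar> < N" "N * d + e = 0" shows "d = 0 \<and> e = 0"
proof -
  have a: "\<bar>-e\<bar> < N" using assms by simp
  have "N * (-d) + (-e) = 0" using assms by simp
  then show ?thesis using aux1[OF assms(1), of d] aux1[OF a, of "-d"] assms(2) by auto
qed
lemma mod_inj_aux: assumes "a < (K::nat)" "a' < K" "(m + a) mod K = (m + a') mod K" shows "a = a'"
proof -
  have "int K dvd int (m + a) - int (m + a')" using assms(3) by (metis mod_eq_dvd_iff zmod_int)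
  then have "int K dvd int a - int a'" by simp
  then show ?thesis using assms(1,2)
    by (metis mod_eq_dvd_iff zmod_int mod_less of_nat_eq_iff)
qed

lemma spec_mono_mult:
  assumes "u > 0"
  shows "spec_mono k r u a b * spec_mono k r u a' b' = spec_mono k r u (a + a') (b + b')"
proof -
  have tz: "tau r \<noteq> 0" unfolding tau_def by (metis cis_neq_zero)
  have "u powr ((real (r - 1) * a - real (k + 1) * real_of_int b) / real (gg k r)) *
        u powr ((real (r - 1) * a' - real (k + 1) * real_of_int b') / real (gg k r)) =
        u powr ((real (r - 1) * (a + a') - real (k + 1) * real_of_int (b + b')) / real (gg k r))"
    unfolding powr_add[symmetric] by (rule arg_cong[of _ _ "\<lambda>e. u powr e"]) (simp add: diff_divide_distrib add_divide_distrib algebra_simps)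
  moreover have "tau r powi (b + b') = tau r powi b * tau r powi b'"
    using tz by (simp add: power_int_add)
  ultimately show ?thesis using assms
    by (simp add: spec_mono_alt mult_ac flip: of_real_mult)
qed

definition Wf :: "nat \<Rightarrow> nat \<Rightarrow> int list \<Rightarrow> nat \<Rightarrow> int" where
  "Wf k r l x = int (r - 1) * int (sig l x) + int (k + 1) * l ! x"

definition keyf :: "nat \<Rightarrow> nat \<Rightarrow> int list \<Rightarrow> nat \<Rightarrow> int" where
  "keyf k r l x = int (length l + 1) * Wf k r l x - int x"

definition Bf :: "nat \<Rightarrow> nat \<Rightarrow> int" where
  "Bf r n = int (n + 1) * int (r - 1)"

lemma key_iff:
  assumes "x < length l" "y < length l"
  shows "keyf k r l y < keyf k r l x + Bf r (length l) \<longleftrightarrow>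
    (Wf k r l y < Wf k r l x + int (r - 1) \<or> (Wf k r l y = Wf k r l x + int (r - 1) \<and> x < y))"
proof -
  define d where "d = Wf k r l y - Wf k r l x - int (r - 1)"
  have e: "keyf k r l y - (keyf k r l x + Bf r (length l)) = int (length l + 1) * d + (int x - int y)"
    unfolding keyf_def Bf_def d_def by (simp add: algebra_simps)
  have "\<bar>int x - int y\<bar> < int (length l + 1)" using assms by auto
  from aux1[OF this, of d] e show ?thesis unfolding d_def by auto
qed

lemma key_inj:
  "inj_on (keyf k r l) {..<length l}"
proof (rule inj_onI)
  fix x y assume xy: "x \<in> {..<length l}" "y \<in> {..<length l}" "keyf k r l x = keyf k r l y"
  have "int (length l + 1) * (Wf k r l x - Wf k r l y) + (int y - int x) = 0"
    using xy(3) unfolding keyf_def by (simp add: algebra_simps)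
  moreover have "\<bar>int y - int x\<bar> < int (length l + 1)" using xy by auto
  ultimately show "x = y" using aux2 by fastforce
qed

lemma step_lam:
  assumes n: "length l = n" and r: "r \<ge> 2" and ab: "a < n" "b < n"
    and cl: "sig l b mod (k + 1) = (sig l a + 1) mod (k + 1)"
    and kc: "Wf k r l b < Wf k r l a + int (r - 1) \<or> (Wf k r l b = Wf k r l a + int (r - 1) \<and> a < b)"
  shows "\<exists>S::int. S \<ge> 0 \<and> (S = 0 \<longrightarrow> a < b) \<and> int (k + 1) * S = Wf k r l a + int (r - 1) - Wf k r l b \<and>
     (\<forall>u>0. ulam k r l b u = ulam k r l a u * spec_mono k r u 1 (int (nat S)))"
proof -
  have "int (sig l b) mod int (k + 1) = (int (sig l a) + 1) mod int (k + 1)"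
  proof -
    have "int (sig l b mod (k + 1)) = int ((sig l a + 1) mod (k + 1))" using cl by simp
    then show ?thesis by (simp only: zmod_int of_nat_add of_nat_1)
  qed
  then have "int (k + 1) dvd (int (sig l a) + 1 - int (sig l b))"
    by (metis mod_eq_dvd_iff)
  then obtain d where d: "int (sig l a) + 1 - int (sig l b) = int (k + 1) * d" by (auto simp: dvd_def)
  define S where "S = int (r - 1) * d + l ! a - l ! b"
  have KS: "int (k + 1) * S = Wf k r l a + int (r - 1) - Wf k r l b"
  proof -
    have "int (k + 1) * S = int (r - 1) * (int (k + 1) * d) + int (k + 1) * (l ! a - l ! b)"
      unfolding S_def by (simp add: algebra_simps)
    also have "\<dots> = int (r - 1) * (int (sig l a) + 1 - int (sig l b)) + int (k + 1) * (l ! a - l ! b)"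
      using d by simp
    finally show ?thesis unfolding Wf_def by (simp add: algebra_simps)
  qed
  have S0: "S \<ge> 0"
  proof -
    have "int (k + 1) * S \<ge> 0" using KS kc by auto
    then show ?thesis by (simp add: zero_le_mult_iff)
  qed
  have S1: "S = 0 \<longrightarrow> a < b" using KS kc by auto
  have ulam_eq: "ulam k r l b u = ulam k r l a u * spec_mono k r u 1 (int (nat S))" if u: "u > 0" for u
  proof -
    have rb: "rho l ! b = (real n - 1) / 2 - real (sig l b)" using rho_eq[OF n] ab by simp
    have ra: "rho l ! a = (real n - 1) / 2 - real (sig l a)" using rho_eq[OF n] ab by simp
    have "ulam k r l a u * spec_mono k r u 1 (int (nat S)) = spec_mono k r u (- (rho l ! a) + 1) (- (l ! a) + S)"
      unfolding ulam_def using S0 u by (simp add: spec_mono_mult)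
    also have "\<dots> = spec_mono k r u (- (rho l ! b)) (- (l ! b))"
    proof (rule spec_mono_eq_suff[OF _ _ u])
      have "real_of_int (int (k + 1) * S) = real_of_int (Wf k r l a + int (r - 1) - Wf k r l b)"
        using KS by simp
      then have "real (k + 1) * real_of_int S = real (r - 1) * real (sig l a) + real (k + 1) * real_of_int (l ! a)
          + real (r - 1) - real (r - 1) * real (sig l b) - real (k + 1) * real_of_int (l ! b)"
        unfolding Wf_def by simp
      then show "real (r - 1) * (- (rho l ! a) + 1) - real (k + 1) * real_of_int (- l ! a + S) =
          real (r - 1) * - (rho l ! b) - real (k + 1) * real_of_int (- l ! b)"
        unfolding ra rb by (simp add: algebra_simps)
      have "- l ! a + S - - l ! b = int (r - 1) * d" unfolding S_def by simp
      then show "int (r - 1) dvd - l ! a + S - - l ! b" by simp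
    qed
    finally show ?thesis unfolding ulam_def by simp
  qed
  show ?thesis using S0 S1 KS ulam_eq by blast
qed

lemma good_of:
  assumes n: "length l = n" "length nu = n"
    and W: "\<forall>x<n. Wf k r l x = int (r - 1) * int (sig nu x) + int (k + 1) * nu ! x"
    and cl: "\<forall>x<n. sig nu x mod (k + 1) = sig l x mod (k + 1)"
  shows "good n (k + 1) (keyf k r l) (\<lambda>x. sig l x mod (k + 1)) (Bf r n) (sig nu)"
  unfolding good_def
proof (intro conjI allI impI)
  fix x assume "x < n" then show "sig nu x < n" using sig_lt[of x nu] n by simp
next
  show "inj_on (sig nu) {..<n}" using sig_inj[of nu] n by simp
next
  fix c assume "c < n" then show "\<exists>x<n. sig nu x = c" using sig_surj[of c nu] n by simp
next
  fix x assume "x < n" then show "sig nu x mod (k + 1) = sig l x mod (k + 1)" using cl by simp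
next
  fix x y assume xy: "x < n" "y < n" "sig nu y = sig nu x + 1"
  then have "prec nu x y" using sig_succ[of x nu y] n by simp
  then have p: "nu ! x > nu ! y \<or> (nu ! x = nu ! y \<and> x < y)" unfolding prec_def .
  have "Wf k r l y - Wf k r l x = int (r - 1) + int (k + 1) * (nu ! y - nu ! x)"
    using W xy by (simp add: algebra_simps)
  moreover have "int (k + 1) * (nu ! y - nu ! x) < 0 \<or> (nu ! y = nu ! x \<and> x < y)"
    using p by (auto simp: mult_less_0_iff)
  ultimately have "Wf k r l y < Wf k r l x + int (r - 1) \<or> (Wf k r l y = Wf k r l x + int (r - 1) \<and> x < y)"
    by auto
  then show "keyf k r l y < keyf k r l x + Bf r n"
    using key_iff[of x l y k r] xy n by simp
qed

lemma wheel_of_cyc: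
  assumes n: "length l = n" and r: "r \<ge> 2"
    and cyc: "is_cyc n (k + 1) (keyf k r l) (\<lambda>x. sig l x mod (k + 1)) (Bf r n) c y"
  shows "\<exists>w. is_wheel k r l w \<and> (\<forall>x\<in>set w. \<exists>t<k + 1. x = y t) \<and> y 0 \<in> set w"
proof -
  define K where "K = k + 1"
  have K0: "K > 0" unfolding K_def by simp
  define Y where "Y t = y (t mod K)" for t
  let ?W = "Wf k r l"
  have cyc': "\<And>t. t < K \<Longrightarrow> y t < n \<and> sig l (y t) mod K = (c + t) mod K \<and>
      keyf k r l (y ((t + 1) mod K)) < keyf k r l (y t) + Bf r n"
    using cyc unfolding is_cyc_def K_def by blast
  have Yn: "Y t < n" for t using cyc'[of "t mod K"] K0 unfolding Y_def by simp
  have Ycls: "sig l (Y t) mod K = (c + t) mod K" for t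
  proof -
    have "sig l (Y t) mod K = (c + t mod K) mod K" using cyc'[of "t mod K"] K0 unfolding Y_def by simp
    also have "\<dots> = (c + t) mod K" by (simp add: mod_add_right_eq)
    finally show ?thesis .
  qed
  have Ykey: "keyf k r l (Y (t + 1)) < keyf k r l (Y t) + Bf r n" for t
  proof -
    have "(t mod K + 1) mod K = (t + 1) mod K" by (metis mod_add_left_eq)
    then show ?thesis using cyc'[of "t mod K"] K0 unfolding Y_def by simp
  qed
  have Ystep: "sig l (Y (t + 1)) mod (k + 1) = (sig l (Y t) + 1) mod (k + 1)" for t
  proof -
    have "sig l (Y (t + 1)) mod K = (c + t + 1) mod K" using Ycls[of "t + 1"] by (simp add: add.assoc)
    also have "\<dots> = ((c + t) mod K + 1) mod K" by (metis mod_add_left_eq)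
    also have "\<dots> = (sig l (Y t) + 1) mod K" using Ycls[of t] by (metis mod_add_left_eq)
    finally show ?thesis unfolding K_def .
  qed
  have "\<forall>t. \<exists>S::int. S \<ge> 0 \<and> (S = 0 \<longrightarrow> Y t < Y (t + 1)) \<and> int (k + 1) * S = ?W (Y t) + int (r - 1) - ?W (Y (t + 1)) \<and>
     (\<forall>u>0. ulam k r l (Y (t + 1)) u = ulam k r l (Y t) u * spec_mono k r u 1 (int (nat S)))"
  proof
    fix t
    have kc: "?W (Y (t + 1)) < ?W (Y t) + int (r - 1) \<or> (?W (Y (t + 1)) = ?W (Y t) + int (r - 1) \<and> Y t < Y (t + 1))"
      using key_iff[of "Y t" l "Y (t + 1)" k r] Ykey[of t] Yn n by simp
    show "\<exists>S::int. S \<ge> 0 \<and> (S = 0 \<longrightarrow> Y t < Y (t + 1)) \<and> int (k + 1) * S = ?W (Y t) + int (r - 1) - ?W (Y (t + 1)) \<and>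
     (\<forall>u>0. ulam k r l (Y (t + 1)) u = ulam k r l (Y t) u * spec_mono k r u 1 (int (nat S)))"
      by (rule step_lam[OF n r Yn Yn Ystep kc])
  qed
  then obtain Sf where Sf: "\<And>t. Sf t \<ge> 0 \<and> (Sf t = 0 \<longrightarrow> Y t < Y (t + 1)) \<and>
      int (k + 1) * Sf t = ?W (Y t) + int (r - 1) - ?W (Y (t + 1)) \<and>
     (\<forall>u>0. ulam k r l (Y (t + 1)) u = ulam k r l (Y t) u * spec_mono k r u 1 (int (nat (Sf t))))"
    by metis
  have YK: "Y (t + K) = Y t" for t unfolding Y_def by simp
  have tele: "int K * (\<Sum>a<m. Sf (b + a)) = int m * int (r - 1) + ?W (Y b) - ?W (Y (b + m))" for b m
  proof -
    have "int K * (\<Sum>a<m. Sf (b + a)) = (\<Sum>a<m. int K * Sf (b + a))" by (simp add: sum_distrib_left)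
    also have "\<dots> = (\<Sum>a<m. (?W (Y (b + a)) - ?W (Y (b + Suc a))) + int (r - 1))"
      using Sf unfolding K_def by (intro sum.cong) (auto simp: algebra_simps)
    also have "\<dots> = (\<Sum>a<m. ?W (Y (b + a)) - ?W (Y (b + Suc a))) + int m * int (r - 1)"
      by (simp add: sum.distrib)
    also have "(\<Sum>a<m. ?W (Y (b + a)) - ?W (Y (b + Suc a))) = ?W (Y (b + 0)) - ?W (Y (b + m))"
      by (rule sum_lessThan_telescope'[where f = "\<lambda>a. ?W (Y (b + a))"])
    finally show ?thesis by simp
  qed
  have total: "(\<Sum>a<K. Sf (0 + a)) = int (r - 1)"
  proof -
    have "int K * (\<Sum>a<K. Sf (0 + a)) = int K * int (r - 1)"
      using tele[of 0 K] YK[of 0] by simp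
    then show ?thesis using K0 by simp
  qed
  have "\<exists>t1<K. Sf t1 \<ge> 1"
  proof (rule ccontr)
    assume na: "\<not> (\<exists>t1<K. Sf t1 \<ge> 1)"
    have "Sf t = 0" if tK: "t < K" for t
      using na tK Sf[of t] by force
    then have "(\<Sum>a<K. Sf (0 + a)) = 0" by simp
    then show False using total r by simp
  qed
  then obtain t1 where t1: "t1 < K" "Sf t1 \<ge> 1" by blast
  define w where "w = map (\<lambda>a. Y (t1 + 1 + a)) [0..<K]"
  define sl where "sl = map (\<lambda>a. nat (Sf (t1 + 1 + a))) [0..<k]"
  have sumsl: "int (sum_list sl) = (\<Sum>a<k. Sf (t1 + 1 + a))"
  proof -
    have "sum_list sl = (\<Sum>a<k. nat (Sf (t1 + 1 + a)))"
      unfolding sl_def by (simp only: sum_set_upt_conv_sum_list_nat[symmetric] set_upt atLeast0LessThan)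
    then show ?thesis using Sf by simp
  qed
  have "int K * (\<Sum>a<k. Sf (t1 + 1 + a)) = int k * int (r - 1) + ?W (Y (t1 + 1)) - ?W (Y (t1 + 1 + k))"
    using tele[of "t1 + 1" k] by simp
  also have "Y (t1 + 1 + k) = Y t1" using YK[of t1] unfolding K_def by (simp add: add.commute add.left_commute)
  also have "?W (Y (t1 + 1)) = ?W (Y t1) + int (r - 1) - int K * Sf t1" using Sf[of t1] unfolding K_def by simp
  finally have "int K * (\<Sum>a<k. Sf (t1 + 1 + a)) = int K * (int (r - 1) - Sf t1)"
    unfolding K_def by (simp add: algebra_simps)
  then have "(\<Sum>a<k. Sf (t1 + 1 + a)) = int (r - 1) - Sf t1" using K0 by simp
  then have slsum: "sum_list sl \<le> r - 2" using sumsl t1 r by linarith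
  have dist: "distinct w"
    unfolding w_def distinct_map
  proof
    show "distinct [0..<K]" by simp
    show "inj_on (\<lambda>a. Y (t1 + 1 + a)) (set [0..<K])"
    proof (rule inj_onI)
      fix a a' assume aa: "a \<in> set [0..<K]" "a' \<in> set [0..<K]" "Y (t1 + 1 + a) = Y (t1 + 1 + a')"
      have "(c + t1 + 1 + a) mod K = (c + t1 + 1 + a') mod K"
        using Ycls[of "t1 + 1 + a"] Ycls[of "t1 + 1 + a'"] aa(3) by (simp add: add.assoc)
      then show "a = a'" using mod_inj_aux[of a K a' "c + t1 + 1"] aa by simp
    qed
  qed
  have wheel: "is_wheel k r l w"
    unfolding is_wheel_def
  proof (intro conjI)
    show "length w = k + 1" unfolding w_def K_def by simp
    show "distinct w" by (rule dist)
    show "\<forall>i\<in>set w. i < length l" unfolding w_def using Yn n by auto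
    show "\<exists>s. length s = k \<and> sum_list s \<le> r - 2 \<and>
      (\<forall>a<k. (\<forall>u>0. ulam k r l (w ! (a + 1)) u = ulam k r l (w ! a) u * spec_mono k r u 1 (int (s ! a))) \<and>
             (s ! a = 0 \<longrightarrow> w ! a < w ! (a + 1)))"
    proof (intro exI[of _ sl] conjI)
      show "length sl = k" unfolding sl_def by simp
      show "sum_list sl \<le> r - 2" by (rule slsum)
      show "\<forall>a<k. (\<forall>u>0. ulam k r l (w ! (a + 1)) u = ulam k r l (w ! a) u * spec_mono k r u 1 (int (sl ! a))) \<and>
             (sl ! a = 0 \<longrightarrow> w ! a < w ! (a + 1))"
      proof (intro allI impI)
        fix a assume a: "a < k"
        have wa: "w ! a = Y (t1 + 1 + a)" "w ! (a + 1) = Y (t1 + 1 + a + 1)"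
          unfolding w_def K_def using a by (simp_all add: add.assoc del: upt_Suc)
        have sa: "sl ! a = nat (Sf (t1 + 1 + a))" unfolding sl_def using a by simp
        show "(\<forall>u>0. ulam k r l (w ! (a + 1)) u = ulam k r l (w ! a) u * spec_mono k r u 1 (int (sl ! a))) \<and>
             (sl ! a = 0 \<longrightarrow> w ! a < w ! (a + 1))"
          using Sf[of "t1 + 1 + a"] unfolding wa sa by auto
      qed
    qed
  qed
  have setw: "\<forall>x\<in>set w. \<exists>t<k + 1. x = y t"
  proof
    fix x assume "x \<in> set w"
    then obtain a where "x = y ((t1 + 1 + a) mod K)" unfolding w_def Y_def by auto
    moreover have "(t1 + 1 + a) mod K < k + 1" using K0 unfolding K_def by simp
    ultimately show "\<exists>t<k + 1. x = y t" by blast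
  qed
  have "y 0 \<in> set w"
  proof -
    have "K - (t1 + 1) < K" using t1 by simp
    then have "Y (t1 + 1 + (K - (t1 + 1))) \<in> set w" unfolding w_def by auto
    moreover have "t1 + 1 + (K - (t1 + 1)) = K" using t1 by simp
    ultimately show ?thesis unfolding Y_def by simp
  qed
  then show ?thesis using wheel setw by blast
qed

lemma pick:
  assumes g1: "good n K key cls B s1" and g2: "good n K key cls B s2"
    and j: "j < n" "s1 j \<noteq> s2 j" "s1 j = t0"
    and mn: "\<forall>x<n. s1 x \<noteq> s2 x \<longrightarrow> t0 \<le> s1 x \<and> t0 \<le> s2 x"
  shows "\<exists>i<n. s2 i = t0 \<and> t0 < s1 i \<and> t0 < s2 j"
proof -
  have "t0 < n" using goodD(1)[OF g1 j(1)] j by simp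
  then obtain i where i: "i < n" "s2 i = t0" using goodD(3)[OF g2] by blast
  have "s1 i \<noteq> s2 i"
  proof
    assume "s1 i = s2 i"
    then have "s1 i = s1 j" using i j by simp
    then have "i = j" using goodD(2)[OF g1 i(1) j(1)] by simp
    then show False using i j by simp
  qed
  then have "t0 < s1 i" using mn i by force
  moreover have "t0 < s2 j" using mn j by force
  ultimately show ?thesis using i by blast
qed

lemma two_cycles:
  assumes K: "K \<ge> 1" and inj: "inj_on key {..<n}"
    and g1: "good n K key cls B s1" and g2: "good n K key cls B s2"
    and diff: "\<exists>x<n. s1 x \<noteq> s2 x"
  shows "\<exists>t0 y1 y2. is_cyc n K key cls B t0 y1 \<and> is_cyc n K key cls B t0 y2 \<and> y1 0 \<noteq> y2 0"
proof -
  define D where "D = {x. x < n \<and> s1 x \<noteq> s2 x}"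
  define T where "T = s1 ` D \<union> s2 ` D"
  have finT: "finite T" unfolding T_def D_def by auto
  have neT: "T \<noteq> {}" using diff unfolding T_def D_def by auto
  define t0 where "t0 = Min T"
  have mn: "\<forall>x<n. s1 x \<noteq> s2 x \<longrightarrow> t0 \<le> s1 x \<and> t0 \<le> s2 x"
    using finT unfolding t0_def T_def D_def by auto
  have "t0 \<in> T" using finT neT unfolding t0_def by simp
  then obtain j where jD: "j \<in> D" and jc: "t0 = s1 j \<or> t0 = s2 j" unfolding T_def by auto
  from jD have j: "j < n" "s1 j \<noteq> s2 j" unfolding D_def by auto
  from jc show ?thesis
  proof
    assume e: "t0 = s1 j"
    obtain i where i: "i < n" "s2 i = t0" "t0 < s1 i" "t0 < s2 j"
      using pick[OF g1 g2 j(1) j(2) e[symmetric] mn] by blast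
    show ?thesis using core[OF K inj g1 g2 i(1) j(1) e[symmetric] i(2) i(3) i(4)] by blast
  next
    assume e: "t0 = s2 j"
    have mn': "\<forall>x<n. s2 x \<noteq> s1 x \<longrightarrow> t0 \<le> s2 x \<and> t0 \<le> s1 x" using mn by auto
    obtain i where i: "i < n" "s1 i = t0" "t0 < s2 i" "t0 < s1 j"
      using pick[OF g2 g1 j(1) j(2)[symmetric] e[symmetric] mn'] by blast
    show ?thesis using core[OF K inj g2 g1 i(1) j(1) e[symmetric] i(2) i(3) i(4)] by blast
  qed
qed

theorem lemma4p7:
  fixes n k r :: nat and lam :: "int list"
  assumes "length lam = n" and "1 \<le> k" and "k \<le> n - 1" and "2 \<le> r"
    and "sharp k r lam \<le> 1"
  shows "\<not> (\<exists>mu :: int list. length mu = n \<and> mu \<noteq> lam \<and>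
           (\<forall>i<n. \<forall>u::real. u > 0 \<longrightarrow>
              spec_mono k r u (rho mu ! i) (mu ! i) = spec_mono k r u (rho lam ! i) (lam ! i)))"
proof
  assume "\<exists>mu :: int list. length mu = n \<and> mu \<noteq> lam \<and>
           (\<forall>i<n. \<forall>u::real. u > 0 \<longrightarrow>
              spec_mono k r u (rho mu ! i) (mu ! i) = spec_mono k r u (rho lam ! i) (lam ! i))"
  then obtain mu where mun: "length mu = n" and mul: "mu \<noteq> lam"
    and H: "\<And>i. i < n \<Longrightarrow> \<forall>u>0. spec_mono k r u (rho mu ! i) (mu ! i) = spec_mono k r u (rho lam ! i) (lam ! i)"
    by blast
  have ln: "length lam = n" using assms(1) .
  have r: "r \<ge> 2" using assms(4) .
  have E1: "int (r - 1) * (int (sig lam x) - int (sig mu x)) = int (k + 1) * (mu ! x - lam ! x)"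
    and dv: "int (r - 1) dvd (mu ! x - lam ! x)" if x: "x < n" for x
  proof -
    have rm: "rho mu ! x = (real n - 1) / 2 - real (sig mu x)" using rho_eq[OF mun] x by simp
    have rl: "rho lam ! x = (real n - 1) / 2 - real (sig lam x)" using rho_eq[OF ln] x by simp
    have "real (r - 1) * rho mu ! x - real (k + 1) * real_of_int (mu ! x) =
          real (r - 1) * rho lam ! x - real (k + 1) * real_of_int (lam ! x)"
      using spec_mono_eq_nec(1)[OF H[OF x] r] .
    then have e: "real (r - 1) * ((real n - 1) / 2) - real (r - 1) * real (sig mu x) - real (k + 1) * real_of_int (mu ! x) =
          real (r - 1) * ((real n - 1) / 2) - real (r - 1) * real (sig lam x) - real (k + 1) * real_of_int (lam ! x)"
      unfolding rm rl by (simp only: right_diff_distrib)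
    have "real_of_int (int (r - 1) * (int (sig lam x) - int (sig mu x))) =
               real (r - 1) * real (sig lam x) - real (r - 1) * real (sig mu x)"
      by (simp add: right_diff_distrib)
    moreover have "real_of_int (int (k + 1) * (mu ! x - lam ! x)) =
               real (k + 1) * real_of_int (mu ! x) - real (k + 1) * real_of_int (lam ! x)"
      by (simp add: right_diff_distrib)
    ultimately have "real_of_int (int (r - 1) * (int (sig lam x) - int (sig mu x))) =
               real_of_int (int (k + 1) * (mu ! x - lam ! x))"
      using e by linarith
    then show "int (r - 1) * (int (sig lam x) - int (sig mu x)) = int (k + 1) * (mu ! x - lam ! x)"
      by (simp only: of_int_eq_iff)
    show "int (r - 1) dvd (mu ! x - lam ! x)" using spec_mono_eq_nec(2)[OF H[OF x] r] .
  qed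
  have W: "\<forall>x<n. Wf k r lam x = int (r - 1) * int (sig mu x) + int (k + 1) * mu ! x"
    using E1 unfolding Wf_def by (auto simp: algebra_simps)
  have cl: "\<forall>x<n. sig mu x mod (k + 1) = sig lam x mod (k + 1)"
  proof (intro allI impI)
    fix x assume x: "x < n"
    obtain m where m: "mu ! x - lam ! x = int (r - 1) * m" using dv[OF x] by (auto simp: dvd_def)
    have "int (r - 1) * (int (sig lam x) - int (sig mu x)) = int (r - 1) * (int (k + 1) * m)"
      using E1[OF x] m by (simp add: algebra_simps)
    moreover have "int (r - 1) \<noteq> 0" using r by simp
    ultimately have "int (sig lam x) - int (sig mu x) = int (k + 1) * m" by simp
    then have "int (k + 1) dvd (int (sig lam x) - int (sig mu x))" by simp
    then have "int (sig lam x) mod int (k + 1) = int (sig mu x) mod int (k + 1)"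
      by (simp add: mod_eq_dvd_iff)
    then have "int (sig lam x mod (k + 1)) = int (sig mu x mod (k + 1))"
      by (simp only: zmod_int)
    then show "sig mu x mod (k + 1) = sig lam x mod (k + 1)" by simp
  qed
  have W1: "\<forall>x<n. Wf k r lam x = int (r - 1) * int (sig lam x) + int (k + 1) * lam ! x"
    unfolding Wf_def by simp
  have g1: "good n (k + 1) (keyf k r lam) (\<lambda>x. sig lam x mod (k + 1)) (Bf r n) (sig lam)"
    using good_of[OF ln ln W1] by simp
  have g2: "good n (k + 1) (keyf k r lam) (\<lambda>x. sig lam x mod (k + 1)) (Bf r n) (sig mu)"
    using good_of[OF ln mun W cl] .
  have inj: "inj_on (keyf k r lam) {..<n}" using key_inj[of k r lam] ln by simp
  have diff: "\<exists>x<n. sig lam x \<noteq> sig mu x"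
  proof (rule ccontr)
    assume "\<not> (\<exists>x<n. sig lam x \<noteq> sig mu x)"
    then have "\<forall>x<n. mu ! x = lam ! x" using E1 by auto
    then have "mu = lam" using mun ln by (intro nth_equalityI) auto
    then show False using mul by simp
  qed
  obtain t0 y1 y2 where
    c1: "is_cyc n (k + 1) (keyf k r lam) (\<lambda>x. sig lam x mod (k + 1)) (Bf r n) t0 y1" and
    c2: "is_cyc n (k + 1) (keyf k r lam) (\<lambda>x. sig lam x mod (k + 1)) (Bf r n) t0 y2" and
    ne: "y1 0 \<noteq> y2 0"
    using two_cycles[OF _ inj g1 g2 diff] by auto
  obtain w1 where w1: "is_wheel k r lam w1" "y1 0 \<in> set w1"
    using wheel_of_cyc[OF ln r c1] by blast
  obtain w2 where w2: "is_wheel k r lam w2" "\<forall>x\<in>set w2. \<exists>t<k + 1. x = y2 t"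
    using wheel_of_cyc[OF ln r c2] by blast
  have "y1 0 \<notin> set w2"
  proof
    assume "y1 0 \<in> set w2"
    then obtain t where t: "t < k + 1" "y1 0 = y2 t" using w2 by blast
    have "sig lam (y1 0) mod (k + 1) = (t0 + 0) mod (k + 1)" using c1 unfolding is_cyc_def by auto
    moreover have "sig lam (y2 t) mod (k + 1) = (t0 + t) mod (k + 1)" using c2 t unfolding is_cyc_def by auto
    ultimately have "(t0 + 0) mod (k + 1) = (t0 + t) mod (k + 1)" using t by simp
    then have "t = 0" using mod_inj_aux[of 0 "k + 1" t t0] t by simp
    then show False using t ne by simp
  qed
  then have setne: "set w1 \<noteq> set w2" using w1 by blast
  define Wh where "Wh = wheels k r lam"
  define R where "R = wheel_rot k r lam"
  have w1W: "w1 \<in> Wh" and w2W: "w2 \<in> Wh" using w1 w2 unfolding Wh_def wheels_def by auto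
  have finWh: "finite Wh"
  proof (rule finite_subset)
    show "Wh \<subseteq> {w. set w \<subseteq> {..<n} \<and> length w = k + 1}"
      unfolding Wh_def wheels_def is_wheel_def using ln by auto
    show "finite {w. set w \<subseteq> {..<n} \<and> length w = k + 1}"
      by (rule finite_lists_length_eq) simp
  qed
  have RW: "R \<subseteq> Wh \<times> Wh" unfolding R_def Wh_def wheel_rot_def by auto
  have finQ: "finite (Wh // R)" by (rule finite_quotient[OF finWh RW])
  have neq: "R `` {w1} \<noteq> R `` {w2}"
  proof
    assume e: "R `` {w1} = R `` {w2}"
    have "(w2, w2) \<in> R" using w2W unfolding R_def wheel_rot_def Wh_def by (auto intro: exI[of _ 0])
    then have "w2 \<in> R `` {w1}" using e by auto
    then obtain j where "w2 = rotate j w1" unfolding R_def wheel_rot_def by auto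
    then have "set w2 = set w1" by simp
    then show False using setne by simp
  qed
  have "{R `` {w1}, R `` {w2}} \<subseteq> Wh // R" using w1W w2W by (auto intro: quotientI)
  then have "card {R `` {w1}, R `` {w2}} \<le> card (Wh // R)" using finQ by (rule card_mono[rotated])
  then have "2 \<le> sharp k r lam" using neq unfolding sharp_def Wh_def R_def by simp
  then show False using assms(5) by simp
qed

end
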